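(* There exists an absolute constant $C_1>0$ such that for all integers $a\ge 2$ and $n\ge 3$, $$\mathrm{Pr}(a^{n}-1)\ \ge\ (a^{n}-1)^{C_1/\ln\ln n}.$$
   Context: For $n=p_1^{l_1}\cdots p_k^{l_k}$ ($p_i$ distinct primes, $l_i\ge1$) and an integer $a\ge 2$, the primitive primover cofactor of $a^n-1$ is $$\mathrm{Pr}(a^n-1)=\frac{\prod_{\varepsilon\in\{0,1\}^k,\ \varepsilon_1+\dots+\varepsilon_k\ \text{even}} \bigl(a^{p_1^{l_1-\varepsilon_1}\cdots p_k^{l_k-\varepsilon_k}}-1\bigr)}{\prod_{\varepsilon\in\{0,1\}^k,\ \varepsilon_1+\dots+\varepsilon_k\ \text{odd}} \bigl(a^{p_1^{l_1-\varepsilon_1}\cdots p_k^{l_k-\varepsilon_k}}-1\bigr)},$$ a positive integer dividing $a^n-1$. *)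

theory Defs
  imports "HOL-Analysis.Analysis" "HOL-Computational_Algebra.Primes"
begin

text \<open>Primitive primover cofactor of a^n - 1. Writing n = p_1^l_1 ... p_k^l_k,
  a vector eps in {0,1}^k corresponds to the subset S of prime factors with eps_i = 1,
  and p_1^(l_1-eps_1) ... p_k^(l_k-eps_k) = n div (prod S).\<close>
definition primover_cofactor :: "nat \<Rightarrow> nat \<Rightarrow> real" where
  "primover_cofactor a n =
     (\<Prod>S\<in>{S. S \<subseteq> prime_factors n \<and> even (card S)}. real a ^ (n div \<Prod>S) - 1) /
     (\<Prod>S\<in>{S. S \<subseteq> prime_factors n \<and> odd (card S)}. real a ^ (n div \<Prod>S) - 1)"

end

theory Submission
  imports Defs "HOL-Number_Theory.Totient"
begin


lemma prod_pf_le: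
  fixes x :: nat
  assumes "x > 0" "A \<subseteq> prime_factors x"
  shows "\<Prod>A \<le> x"
proof -
  have fin: "finite (prime_factors x)" by simp
  have e: "\<Prod>(prime_factors x) = \<Prod>(prime_factors x - A) * \<Prod>A"
    by (rule prod.subset_diff[OF assms(2)]) simp
  have "\<Prod>(prime_factors x - A) \<ge> 1"
    by (rule prod_ge_1) (metis DiffD1 in_prime_factors_imp_prime prime_ge_1_nat)
  then have "\<Prod>A \<le> \<Prod>(prime_factors x)" unfolding e
    by (metis mult_le_mono1 nat_mult_1)
  also have "\<dots> \<le> (\<Prod>p\<in>prime_factors x. p ^ multiplicity p x)"
  proof (intro prod_mono conjI)
    fix p assume p: "p \<in> prime_factors x"
    then have "multiplicity p x > 0" by (simp add: prime_factors_multiplicity)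
    then show "p \<le> p ^ multiplicity p x"
    proof -
      have "prime p" using p by (rule in_prime_factors_imp_prime)
      then have "1 \<le> p" using prime_gt_1_nat[of p] by simp
      then show ?thesis using \<open>multiplicity p x > 0\<close> by (simp add: self_le_power)
    qed
  qed auto
  also have "\<dots> = x" using prime_factorization_nat[OF assms(1)] by simp
  finally show ?thesis .
qed

definition primes_upto :: "nat \<Rightarrow> nat set" where
  "primes_upto N = {p. prime p \<and> p \<le> N}"

lemma finite_primes_upto[simp]: "finite (primes_upto N)"
  unfolding primes_upto_def by auto

definition theta :: "nat \<Rightarrow> real" where
  "theta N = (\<Sum>p\<in>primes_upto N. ln (real p))"

lemma prod_mid_le: "\<Prod>{p. prime p \<and> m < p \<and> p \<le> 2*m} \<le> 4 ^ m"
proof (cases "m = 0")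
  case True
  then have e: "{p. prime p \<and> m < p \<and> p \<le> 2*m} = {}" by auto
  show ?thesis unfolding e by simp
next
  case False
  let ?B = "(2*m) choose m"
  have Bpos: "?B > 0" by simp
  have sub: "{p. prime p \<and> m < p \<and> p \<le> 2*m} \<subseteq> prime_factors ?B"
  proof
    fix p assume p: "p \<in> {p. prime p \<and> m < p \<and> p \<le> 2*m}"
    then have pr: "prime p" and mp: "m < p" and p2: "p \<le> 2*m" by auto
    have "p dvd fact (2*m)" using pr p2 by (simp add: prime_dvd_fact_iff)
    also have "fact (2*m) = fact m * fact m * ?B"
      using binomial_fact_lemma[of m "2*m"] by simp
    finally have "p dvd fact m * fact m * ?B" .
    moreover have "\<not> p dvd fact m" using pr mp by (simp add: prime_dvd_fact_iff)
    ultimately have "p dvd ?B" using pr by (simp add: prime_dvd_mult_iff)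
    then show "p \<in> prime_factors ?B" using pr Bpos by (intro prime_factorsI) auto
  qed
  have "\<Prod>{p. prime p \<and> m < p \<and> p \<le> 2*m} \<le> ?B" by (rule prod_pf_le[OF Bpos sub])
  also have "\<dots> \<le> 2 ^ (2*m)" by (rule binomial_le_pow2)
  also have "\<dots> = 4 ^ m" by (simp add: power_mult)
  finally show ?thesis .
qed

lemma theta_double: "theta (2*m) - theta m \<le> m * ln 4"
proof -
  have split: "primes_upto (2*m) = primes_upto m \<union> {p. prime p \<and> m < p \<and> p \<le> 2*m}"
    unfolding primes_upto_def by auto
  have "theta (2*m) = theta m + (\<Sum>p\<in>{p. prime p \<and> m < p \<and> p \<le> 2*m}. ln (real p))"
    unfolding theta_def split
    by (subst sum.union_disjoint) (auto simp: primes_upto_def)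
  also have "(\<Sum>p\<in>{p. prime p \<and> m < p \<and> p \<le> 2*m}. ln (real p))
      = ln (real (\<Prod>{p. prime p \<and> m < p \<and> p \<le> 2*m}))"
    by (subst of_nat_prod, subst ln_prod) (auto simp: prime_gt_0_nat)
  also have "\<dots> \<le> ln (real (4 ^ m))"
  proof -
    have "\<Prod>{p. prime p \<and> m < p \<and> p \<le> 2*m} > 0"
      by (rule prod_pos) (auto simp: prime_gt_0_nat)
    moreover have "real (\<Prod>{p. prime p \<and> m < p \<and> p \<le> 2*m}) \<le> real (4 ^ m)"
      using prod_mid_le[of m] by (simp only: of_nat_le_iff)
    ultimately show ?thesis
      using ln_le_cancel_iff[of "real (\<Prod>{p. prime p \<and> m < p \<and> p \<le> 2*m})" "real (4^m)"]
      by (simp only: of_nat_0_less_iff zero_less_power)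
  qed
  also have "\<dots> = m * ln 4" by (simp add: ln_realpow)
  finally show ?thesis by simp
qed

lemma theta_pow2: "theta (2^J) \<le> 2^(J+1) * ln 2"
proof (induction J)
  case 0
  have "primes_upto 1 = {}" unfolding primes_upto_def by (auto dest: prime_gt_1_nat)
  then show ?case by (simp add: theta_def)
next
  case (Suc J)
  have "theta (2^Suc J) = theta (2^J) + (theta (2*2^J) - theta (2^J))" by simp
  also have "\<dots> \<le> 2^(J+1) * ln 2 + 2^J * ln 4"
    using Suc.IH theta_double[of "2^J"] by simp
  also have "ln (4::real) = 2 * ln 2"
    using ln_realpow[of 2 2] by simp
  finally show ?case by (simp add: algebra_simps)
qed



lemma ln_pf_le:
  assumes "(x::nat) > 0"
  shows "(\<Sum>p\<in>prime_factors x. ln (real p)) \<le> ln (real x)"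
proof -
  have pos: "\<Prod>(prime_factors x) > 0"
    by (rule prod_pos) (auto dest: in_prime_factors_imp_prime simp: prime_gt_0_nat)
  have "(\<Sum>p\<in>prime_factors x. ln (real p)) = ln (real (\<Prod>(prime_factors x)))"
    by (subst of_nat_prod, subst ln_prod) (auto dest: in_prime_factors_imp_prime simp: prime_gt_0_nat)
  also have "\<dots> \<le> ln (real x)"
  proof -
    have a: "real (\<Prod>(prime_factors x)) \<le> real x"
      using prod_pf_le[OF assms, of "prime_factors x"] by (simp only: of_nat_le_iff)
    have b: "0 < real (\<Prod>(prime_factors x))" using pos by (simp only: of_nat_0_less_iff)
    show ?thesis using ln_le_cancel_iff[OF b, of "real x"] a assms by simp
  qed
  finally show ?thesis .
qed

lemma div_Suc_prime:
  "real (Suc N div p) = real (N div p) + (if p dvd Suc N then 1 else 0)"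
  by (simp add: div_Suc dvd_eq_mod_eq_0)

lemma legendre_aux:
  "N \<le> M \<Longrightarrow> (\<Sum>p\<in>primes_upto M. real (N div p) * ln (real p)) \<le> real N * ln (real N)"
proof (induction N)
  case 0 then show ?case by simp
next
  case (Suc N)
  have sub: "prime_factors (Suc N) = {p\<in>primes_upto M. p dvd Suc N}"
    using Suc.prems unfolding primes_upto_def
    using dvd_imp_le[of _ "Suc N"] by (auto simp: in_prime_factors_iff) (meson le_trans zero_less_Suc)
  have "(\<Sum>p\<in>primes_upto M. real (Suc N div p) * ln (real p))
      = (\<Sum>p\<in>primes_upto M. real (N div p) * ln (real p))
        + (\<Sum>p\<in>primes_upto M. (if p dvd Suc N then ln (real p) else 0))"
    by (subst sum.distrib[symmetric]) (rule sum.cong; simp add: div_Suc_prime distrib_right)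
  also have "(\<Sum>p\<in>primes_upto M. (if p dvd Suc N then ln (real p) else 0))
       = (\<Sum>p\<in>prime_factors (Suc N). ln (real p))"
    unfolding sub by (simp add: sum.inter_filter)
  also have "\<dots> \<le> ln (real (Suc N))" by (rule ln_pf_le) simp
  also have "(\<Sum>p\<in>primes_upto M. real (N div p) * ln (real p)) \<le> real N * ln (real N)"
    using Suc by simp
  also have "real N * ln (real N) \<le> real N * ln (real (Suc N))"
  proof (cases "N = 0")
    case False then show ?thesis by (intro mult_left_mono) auto
  qed simp
  finally show ?case by (simp add: algebra_simps)
qed

definition T :: "nat \<Rightarrow> real" where
  "T N = (\<Sum>p\<in>primes_upto N. ln (real p) / real p)"

lemma T_bound:
  assumes "N > 0"
  shows "T N \<le> ln (real N) + theta N / real N"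
proof -
  have "real N * T N = (\<Sum>p\<in>primes_upto N. (real N / real p) * ln (real p))"
    unfolding T_def by (simp add: sum_distrib_left)
  also have "\<dots> \<le> (\<Sum>p\<in>primes_upto N. (real (N div p) + 1) * ln (real p))"
  proof (intro sum_mono mult_right_mono)
    fix p assume "p \<in> primes_upto N"
    then have p: "p > 1" by (auto simp: primes_upto_def dest: prime_gt_1_nat)
    have "N = p * (N div p) + N mod p" by simp
    moreover have "N mod p < p" using p by simp
    ultimately have "real N < real p * (real (N div p) + 1)"
      by (metis add_less_cancel_left distrib_left mult.right_neutral of_nat_add of_nat_less_iff of_nat_mult of_nat_1)
    then show "real N / real p \<le> real (N div p) + 1"
      using p by (simp add: divide_le_eq mult.commute)
    show "0 \<le> ln (real p)" using p by simp
  qed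
  also have "\<dots> = (\<Sum>p\<in>primes_upto N. real (N div p) * ln (real p)) + theta N"
    unfolding theta_def by (simp add: distrib_right sum.distrib)
  also have "\<dots> \<le> real N * ln (real N) + theta N"
    using legendre_aux[of N N] by simp
  finally have "real N * T N \<le> real N * ln (real N) + theta N" .
  then show ?thesis using assms by (simp add: field_simps)
qed

lemma T_pow2: "T (2^J) \<le> (real J + 2) * ln 2"
proof -
  have "T (2^J) \<le> ln (real (2^J)) + theta (2^J) / real (2^J)" by (rule T_bound) simp
  also have "theta (2^J) / real (2^J) \<le> 2 * ln 2"
    using theta_pow2[of J] by (simp add: pos_divide_le_eq mult_ac)
  also have "ln (real (2^J)) = real J * ln 2" by (simp add: ln_realpow)
  finally show ?thesis by (simp add: algebra_simps)
qed



definition S :: "nat \<Rightarrow> real" where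
  "S J = (\<Sum>p\<in>primes_upto (2^J). 1 / real p)"

lemma T_nonneg: "T N \<ge> 0"
  unfolding T_def by (intro sum_nonneg) (auto simp: primes_upto_def dest: prime_gt_1_nat)

lemma primes_upto_split:
  "primes_upto (2^Suc J) = primes_upto (2^J) \<union> {p. prime p \<and> 2^J < p \<and> p \<le> 2^Suc J}"
  unfolding primes_upto_def by auto

lemma S_block:
  assumes "J \<ge> 1"
  shows "S (Suc J) - S J \<le> (T (2^Suc J) - T (2^J)) / (real J * ln 2)"
proof -
  let ?B = "{p. prime p \<and> 2^J < p \<and> p \<le> (2::nat)^Suc J}"
  have fB: "finite ?B" by simp
  have dis: "primes_upto (2^J) \<inter> ?B = {}" unfolding primes_upto_def by auto
  have "S (Suc J) - S J = (\<Sum>p\<in>?B. 1 / real p)"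
    unfolding S_def primes_upto_split by (subst sum.union_disjoint[OF _ fB dis]) auto
  also have "\<dots> \<le> (\<Sum>p\<in>?B. (ln (real p) / real p) / (real J * ln 2))"
  proof (intro sum_mono)
    fix p assume p: "p \<in> ?B"
    then have "real p > 2^J" by (metis (mono_tags) mem_Collect_eq of_nat_less_iff of_nat_numeral of_nat_power)
    then have "ln (real p) \<ge> ln (2^J)" by (intro ln_mono) auto
    then have l: "ln (real p) \<ge> real J * ln 2" by (simp add: ln_realpow)
    have jl: "real J * ln 2 > 0" using assms by simp
    have pp: "real p > 0" using \<open>real p > 2^J\<close> by (smt (verit) zero_less_power)
    have "1 / real p = (real J * ln 2 / real p) / (real J * ln 2)" using jl pp assms by (simp add: field_simps)
    also have "\<dots> \<le> (ln (real p) / real p) / (real J * ln 2)"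
      using l jl pp by (intro divide_right_mono divide_right_mono) auto
    finally show "1 / real p \<le> (ln (real p) / real p) / (real J * ln 2)" .
  qed
  also have "\<dots> = (\<Sum>p\<in>?B. ln (real p) / real p) / (real J * ln 2)"
    by (simp add: sum_divide_distrib)
  also have "(\<Sum>p\<in>?B. ln (real p) / real p) = T (2^Suc J) - T (2^J)"
    unfolding T_def primes_upto_split by (subst sum.union_disjoint[OF _ fB dis]) auto
  finally show ?thesis .
qed

lemma ln_succ_ge: "real J \<ge> 1 \<Longrightarrow> ln (real J + 1) - ln (real J) \<ge> 1 / (real J + 1)"
proof -
  assume J: "real J \<ge> 1"
  have "ln (real J / (real J + 1)) \<le> real J / (real J + 1) - 1"
    using J by (intro ln_le_minus_one) auto
  moreover have "ln (real J / (real J + 1)) = ln (real J) - ln (real J + 1)"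
    using J by (simp add: ln_div)
  moreover have "real J / (real J + 1) - 1 = - 1 / (real J + 1)"
    using J by (simp add: field_simps)
  ultimately show ?thesis by simp
qed

lemma alg_aux:
  fixes a t t' j L :: real
  assumes "j > 0" "L > 0"
  shows "(a - t / (j * L)) + t' * (1 / j - 1 / (j + 1)) / L
       = a + (t' - t) / (j * L) - t' / ((j + 1) * L)"
proof -
  have 1: "t' * (1/j - 1/(j+1)) / L = t'/(j*L) - t'/((j+1)*L)"
    by (simp add: right_diff_distrib diff_divide_distrib)
  have 2: "(t'-t)/(j*L) = t'/(j*L) - t/(j*L)" by (rule diff_divide_distrib)
  show ?thesis unfolding 1 2 by simp
qed

lemma alg_aux2:
  fixes j :: real
  assumes "j > 0"
  shows "(j + 3) * (1 / j - 1 / (j + 1)) = 1 / (j + 1) + 3 * (1 / j - 1 / (j + 1))"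
proof -
  have p: "j + 1 > 0" using assms by simp
  have "j * (1 / j - 1 / (j + 1)) = 1 / (j + 1)"
    using assms p by (simp add: right_diff_distrib divide_simps)
  then show ?thesis by (simp add: distrib_right)
qed

lemma G_bound:
  "J \<ge> 1 \<Longrightarrow> S J - T (2^J) / (real J * ln 2) \<le> ln (real J) + 3 - 3 / real J"
proof (induction J rule: dec_induct)
  case base
  have "S 1 \<le> T 2 / ln 2"
    unfolding S_def T_def by (simp add: sum_divide_distrib)
      (intro sum_mono, auto simp: primes_upto_def field_simps dest: prime_gt_1_nat)
  then show ?case by simp
next
  case (step J)
  have J1: "real J \<ge> 1" using step by simp
  have l2: "ln 2 > (0::real)" by simp
  have T1: "T (2^Suc J) \<le> (real J + 3) * ln 2"
    using T_pow2[of "Suc J"] by (simp add: add.commute)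
  have blk: "S (Suc J) \<le> S J + (T (2^Suc J) - T (2^J)) / (real J * ln 2)"
    using S_block[OF step(1)] by simp
  define c where "c = 1 / real J - 1 / (real J + 1)"
  have A: "S (Suc J) - T (2^Suc J) / (real (Suc J) * ln 2)
      \<le> (S J - T (2^J) / (real J * ln 2)) + T (2^Suc J) * c / ln 2"
  proof -
    have e: "(S J - T (2^J) / (real J * ln 2)) + T (2^Suc J) * (1 / real J - 1 / (real J + 1)) / ln 2
       = S J + (T (2^Suc J) - T (2^J)) / (real J * ln 2) - T (2^Suc J) / ((real J + 1) * ln 2)"
      using J1 l2 by (intro alg_aux) auto
    show ?thesis using blk unfolding e c_def by (simp add: add.commute)
  qed
  have B: "T (2^Suc J) * c / ln 2 \<le> (real J + 3) * c"
  proof -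
    have c: "c \<ge> 0" using J1 unfolding c_def by (simp add: field_simps)
    have "T (2^Suc J) * c \<le> (real J + 3) * ln 2 * c"
      using T1 c by (intro mult_right_mono) auto
    then show ?thesis by (subst pos_divide_le_eq[OF l2]) (simp add: mult_ac)
  qed
  have C: "(real J + 3) * c = 1 / (real J + 1) + 3 * c"
    using alg_aux2[of "real J"] J1 unfolding c_def by simp
  have D: "1 / (real J + 1) \<le> ln (real J + 1) - ln (real J)" using ln_succ_ge J1 by simp
  have E: "3 / real J - 3 / real (Suc J) = 3 * c" unfolding c_def by (simp add: right_diff_distrib)
  have F: "ln (real (Suc J)) = ln (real J + 1)" by simp
  show ?case using A B C D E F step.IH by linarith
qed

lemma S_bound: "J \<ge> 1 \<Longrightarrow> S J \<le> ln (real J) + 6"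
proof -
  assume J: "J \<ge> 1"
  have "S J \<le> T (2^J) / (real J * ln 2) + ln (real J) + 3"
    using G_bound[OF J] J by (smt (verit, best) divide_nonneg_nonneg of_nat_0_le_iff)
  also have "T (2^J) / (real J * ln 2) \<le> ((real J + 2) * ln 2) / (real J * ln 2)"
    using T_pow2[of J] J by (intro divide_right_mono) auto
  also have "((real J + 2) * ln 2) / (real J * ln 2) = 1 + 2 / real J" using J by (simp add: field_simps)
  also have "2 / real J \<le> 2" using J by (simp add: field_simps)
  finally show ?thesis by simp
qed



lemma primes_upto_Suc:
  "primes_upto (Suc N) = primes_upto N \<union> (if prime (Suc N) then {Suc N} else {})"
  unfolding primes_upto_def by (auto simp: le_Suc_eq)

lemma frac_aux: "(x::real) > 0 \<Longrightarrow> 1 / x - 1 / (x + 1) = 1 / (x * (x + 1))"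
  by (smt (verit) diff_divide_distrib nonzero_divide_mult_cancel_left
    nonzero_divide_mult_cancel_right)

lemma sum_inv_sq: "N \<ge> 1 \<Longrightarrow> (\<Sum>p\<in>primes_upto N. 1 / (real p)^2) \<le> 1 - 1 / real N"
proof (induction N rule: dec_induct)
  case base
  have "primes_upto 1 = {}" unfolding primes_upto_def by (auto dest: prime_gt_1_nat)
  then show ?case by simp
next
  case (step N)
  have k: "1 / (real N + 1)^2 \<le> 1 / real N - 1 / (real N + 1)"
  proof -
    have "1 / real N - 1 / (real N + 1) = 1 / (real N * (real N + 1))"
      by (rule frac_aux) (use step in simp)
    moreover have "1 / (real N + 1)^2 \<le> 1 / (real N * (real N + 1))"
      using step by (intro divide_left_mono) (auto simp: power2_eq_square)
    ultimately show ?thesis by simp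
  qed
  show ?case
  proof (cases "prime (Suc N)")
    case True
    have "Suc N \<notin> primes_upto N" unfolding primes_upto_def by auto
    then have "(\<Sum>p\<in>primes_upto (Suc N). 1 / (real p)^2)
        = (\<Sum>p\<in>primes_upto N. 1 / (real p)^2) + 1 / (real N + 1)^2"
      using True unfolding primes_upto_Suc by (simp add: add.commute)
    then show ?thesis using step.IH k by (simp add: add.commute)
  next
    case False
    then have "primes_upto (Suc N) = primes_upto N" unfolding primes_upto_Suc by simp
    moreover have "1 / real N \<ge> 1 / (real N + 1)" using step by (simp add: frac_le)
    ultimately show ?thesis using step.IH by (simp add: add.commute)
  qed
qed

lemma mertens_prod:
  assumes "J \<ge> 1"
  shows "(\<Prod>p\<in>primes_upto (2^J). 1 - 1 / real p) \<ge> exp (-8) / real J"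
proof -
  let ?P = "primes_upto (2^J)"
  have pr: "\<And>p. p \<in> ?P \<Longrightarrow> real p \<ge> 2"
  proof -
    fix p assume "p \<in> ?P"
    then have "prime p" unfolding primes_upto_def by simp
    then have "p \<ge> 2" by (rule prime_ge_2_nat)
    then show "real p \<ge> 2" by simp
  qed
  have aux: "\<And>x::real. x \<ge> 2 \<Longrightarrow> 1 - 1 / x > 0"
  proof -
    fix x :: real assume "x \<ge> 2"
    then have "1 / x \<le> 1 / 2" by (intro divide_left_mono) auto
    then show "1 - 1 / x > 0" by simp
  qed
  have pos: "\<And>p. p \<in> ?P \<Longrightarrow> 1 - 1 / real p > 0"
    using pr aux by blast
  have "ln (\<Prod>p\<in>?P. 1 - 1 / real p) = (\<Sum>p\<in>?P. ln (1 - 1 / real p))"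
  proof (rule ln_prod)
    show "finite ?P" by simp
    fix p assume "p \<in> ?P"
    from pos[OF this] show "1 - 1 / real p \<noteq> 0" by linarith
  qed
  also have "\<dots> \<ge> (\<Sum>p\<in>?P. - (1 / real p) - 2 * (1 / real p)^2)"
  proof (intro sum_mono)
    fix p assume p: "p \<in> ?P"
    show "- (1 / real p) - 2 * (1 / real p)^2 \<le> ln (1 - 1 / real p)"
      using pr[OF p] by (intro ln_one_minus_pos_lower_bound) (auto simp: field_simps)
  qed
  also have "(\<Sum>p\<in>?P. - (1 / real p) - 2 * (1 / real p)^2) = - S J - 2 * (\<Sum>p\<in>?P. 1 / (real p)^2)"
    unfolding S_def by (simp add: sum_subtractf sum_negf sum_distrib_left power_one_over)
  also have "\<dots> \<ge> - (ln (real J) + 6) - 2"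
  proof -
    have "2^J \<ge> (1::nat)" by simp
    from sum_inv_sq[OF this] have "(\<Sum>p\<in>?P. 1 / (real p)^2) \<le> 1 - 1 / real (2^J)" .
    moreover have "1 / real ((2::nat)^J) \<ge> 0" by simp
    ultimately have "(\<Sum>p\<in>?P. 1 / (real p)^2) \<le> 1" by linarith
    then show ?thesis using S_bound[OF assms] by linarith
  qed
  finally have l: "ln (\<Prod>p\<in>?P. 1 - 1 / real p) \<ge> - 8 - ln (real J)" by simp
  have ppos: "(\<Prod>p\<in>?P. 1 - 1 / real p) > 0" using pos by (intro prod_pos) auto
  have "exp (-8) / real J = exp (- 8 - ln (real J))"
    using assms by (simp add: exp_diff)
  also have "\<dots> \<le> exp (ln (\<Prod>p\<in>?P. 1 - 1 / real p))" using l by simp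
  also have "\<dots> = (\<Prod>p\<in>?P. 1 - 1 / real p)" using ppos by simp
  finally show ?thesis .
qed



lemma ln_ge_one_minus_inv: "(x::real) > 0 \<Longrightarrow> ln x \<ge> 1 - 1 / x"
proof -
  assume x: "x > 0"
  have "ln (1 / x) \<le> 1 / x - 1" using x by (intro ln_le_minus_one) auto
  moreover have "ln (1 / x) = - ln x" using x by (simp add: ln_div)
  ultimately show ?thesis by simp
qed

lemma ln3_lb: "ln (3::real) \<ge> 1 + (1 - 272/300)"
proof -
  have e0: "exp 1 > (0::real)" by simp
  have "ln (3 / exp 1) \<ge> 1 - exp 1 / (3::real)"
    using ln_ge_one_minus_inv[of "3 / exp 1"] e0 by simp
  moreover have "ln (3 / exp 1) = ln (3::real) - 1" using e0 by (simp add: ln_div)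
  moreover have "exp 1 / 3 \<le> (272/300::real)" using e_less_272 by simp
  ultimately show ?thesis by linarith
qed

lemma lnln_lb:
  assumes "n \<ge> 3"
  shows "ln (ln (real n)) \<ge> 1 / 12"
proof -
  have "ln (real n) \<ge> ln 3" using assms by (subst ln_le_cancel_iff) auto
  then have L: "ln (real n) \<ge> 1 + (1 - 272/300)" using ln3_lb by linarith
  then have "ln (ln (real n)) \<ge> 1 - 1 / ln (real n)" by (intro ln_ge_one_minus_inv) linarith
  moreover have "1 / ln (real n) \<le> 1 / (1 + (1 - 272/300))"
    using L by (intro divide_left_mono) auto
  ultimately show ?thesis by simp
qed

lemma ln2_ge_half: "ln (2::real) \<ge> 1/2"
  using ln_ge_one_minus_inv[of 2] by simp

lemma prod_sub_le:
  fixes f :: "nat \<Rightarrow> real"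
  assumes "finite B" "A \<subseteq> B" "\<And>x. x \<in> B \<Longrightarrow> 0 \<le> f x \<and> f x \<le> 1"
  shows "prod f B \<le> prod f A"
proof -
  have "prod f B = prod f (B - A) * prod f A" by (rule prod.subset_diff[OF assms(2,1)])
  moreover have "prod f (B - A) \<le> 1" using assms(3) by (intro prod_le_1) auto
  moreover have "prod f A \<ge> 0" using assms by (intro prod_nonneg) auto
  ultimately show ?thesis using mult_right_mono[of "prod f (B-A)" 1 "prod f A"] by simp
qed



lemma phi_large:
  assumes n27: "n \<ge> 27"
  shows "(\<Prod>p\<in>prime_factors n. 1 - 1 / real p) \<ge> exp (-8) / (12 * ln (ln (real n)))"
proof -
  define L where "L = ln (real n)"
  have "ln (27::real) = 3 * ln 3"
    using ln_realpow[of 3 3] by simp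
  moreover have "ln (real n) \<ge> ln 27" using n27 by (subst ln_le_cancel_iff) auto
  ultimately have L3: "L \<ge> 3" using ln3_gt_1 unfolding L_def by linarith
  have lnL: "ln L \<ge> 1"
  proof -
    have "ln L \<ge> ln 3" using L3 by (subst ln_le_cancel_iff) auto
    then show ?thesis using ln3_gt_1 by linarith
  qed
  define t where "t = log 2 L"
  have t_eq: "t = ln L / ln 2" unfolding t_def log_def by simp
  have tpos: "t > 0" unfolding t_def using L3 by simp
  define J where "J = nat \<lceil>t\<rceil> + 3"
  have J1: "real J \<ge> t + 3" unfolding J_def using tpos by linarith
  have J2: "real J \<le> t + 4" unfolding J_def using tpos by linarith
  have Jge: "J \<ge> 1" unfolding J_def by simp
  define y where "y = (2::nat)^J"
  have y8: "real y \<ge> 8 * L"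
  proof -
    have "real y = 2 powr real J" unfolding y_def by (simp add: powr_realpow)
    also have "\<dots> \<ge> 2 powr (t + 3)" using J1 by (intro powr_mono) auto
    also have "2 powr (t + 3) = 2 powr t * 2 powr 3" by (rule powr_add)
    also have "2 powr t = L" unfolding t_def using L3 by simp
    also have "(2::real) powr 3 = 8" using powr_realpow[of 2 3] by simp
    finally show ?thesis by simp
  qed
  define A where "A = {p\<in>prime_factors n. p \<le> y}"
  define B where "B = {p\<in>prime_factors n. \<not> p \<le> y}"
  have npos: "n > 0" using n27 by simp
  have fB: "finite B" unfolding B_def by simp
  have fA: "finite A" unfolding A_def by simp
  have prB: "\<And>p. p \<in> B \<Longrightarrow> prime p \<and> p > y" unfolding B_def by auto
  have split: "prime_factors n = A \<union> B" "A \<inter> B = {}" unfolding A_def B_def by auto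
  have "(\<Prod>p\<in>prime_factors n. 1 - 1 / real p) = (\<Prod>p\<in>A. 1 - 1 / real p) * (\<Prod>p\<in>B. 1 - 1 / real p)"
    unfolding split(1) by (rule prod.union_disjoint[OF fA fB split(2)])
  moreover have PA: "(\<Prod>p\<in>A. 1 - 1 / real p) \<ge> exp (-8) / real J"
  proof -
    have "A \<subseteq> primes_upto y" unfolding A_def primes_upto_def by auto
    then have "(\<Prod>p\<in>primes_upto y. 1 - 1 / real p) \<le> (\<Prod>p\<in>A. 1 - 1 / real p)"
      by (intro prod_sub_le) (auto simp: primes_upto_def dest: prime_gt_0_nat)
    moreover have "(\<Prod>p\<in>primes_upto y. 1 - 1 / real p) \<ge> exp (-8) / real J"
      unfolding y_def by (rule mertens_prod[OF Jge])
    ultimately show ?thesis by linarith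
  qed
  moreover have PB: "(\<Prod>p\<in>B. 1 - 1 / real p) \<ge> 1 / 2"
  proof -
    define k where "k = card B"
    have ypos: "real y > 0" using y8 L3 by linarith
    have y_pow: "real y ^ k \<le> real n"
    proof -
      have "y ^ k = (\<Prod>p\<in>B. y)" unfolding k_def by simp
      also have "\<dots> \<le> \<Prod>B" by (intro prod_mono) (use prB in \<open>auto intro: less_imp_le\<close>)
      also have "\<dots> \<le> n" using prod_pf_le[OF npos, of B] unfolding B_def by auto
      finally have "y ^ k \<le> n" .
      then show ?thesis by (metis of_nat_le_iff of_nat_power)
    qed
    have lny: "ln (real y) \<ge> 1"
    proof -
      have "ln (real y) \<ge> ln 3" using y8 L3 by (subst ln_le_cancel_iff) auto
      then show ?thesis using ln3_gt_1 by linarith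
    qed
    have "real k * ln (real y) = ln (real y ^ k)" using ypos by (simp add: ln_realpow)
    also have "\<dots> \<le> L" unfolding L_def using y_pow ypos npos by (subst ln_le_cancel_iff) auto
    finally have "real k * ln (real y) \<le> L" .
    then have kL: "real k \<le> L" using lny
      by (smt (verit, best) mult_le_cancel_left1 of_nat_0_le_iff)
    have ky: "real k / real y \<le> 1 / 8"
    proof -
      have "real k / real y \<le> L / (8 * L)" using kL y8 L3 ypos
        by (intro frac_le) auto
      also have "L / (8 * L) = 1 / 8" using L3 by simp
      finally show ?thesis .
    qed
    have "(\<Prod>p\<in>B. 1 - 1 / real y) \<le> (\<Prod>p\<in>B. 1 - 1 / real p)"
    proof (intro prod_mono conjI)
      fix p assume p: "p \<in> B"
      have "real p > real y" using prB[OF p] by simp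
      then have "1 / real p \<le> 1 / real y" using ypos by (intro divide_left_mono) auto
      then show "1 - 1 / real y \<le> 1 - 1 / real p" by simp
      show "0 \<le> 1 - 1 / real y" using y8 L3 by (simp add: field_simps)
    qed
    moreover have "(\<Prod>p\<in>B. 1 - 1 / real y) = (1 + (- 1 / real y)) ^ k" unfolding k_def by simp
    moreover have "(1 + (- 1 / real y)) ^ k \<ge> 1 + real k * (- 1 / real y)"
      using ypos y8 L3 by (intro Bernoulli_inequality) (simp add: field_simps)
    moreover have "1 + real k * (- 1 / real y) = 1 - real k / real y" by simp
    ultimately show ?thesis using ky by linarith
  qed
  moreover have "exp (-8) / real J * (1 / 2) \<ge> exp (-8) / (12 * ln L)"
  proof -
    have "ln 2 \<ge> (1::real) / 2" by (rule ln2_ge_half)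
    then have "t \<le> 2 * ln L" unfolding t_eq using lnL by (simp add: divide_le_eq)
    then have "real J \<le> 6 * ln L" using J2 lnL by linarith
    then have "2 * real J \<le> 12 * ln L" by simp
    moreover have "real J > 0" using Jge by simp
    ultimately have "exp (-8) / (12 * ln L) \<le> exp (-8) / (2 * real J)"
      by (intro divide_left_mono) auto
    then show ?thesis by simp
  qed
  ultimately show ?thesis unfolding L_def
    by (smt (verit) divide_nonneg_nonneg exp_ge_zero mult_mono of_nat_0_le_iff)
qed



lemma totient_lb:
  assumes "n \<ge> 3"
  shows "real (totient n) \<ge> (exp (-8) / 324) * real n / ln (ln (real n))"
proof -
  have ll: "ln (ln (real n)) \<ge> 1/12" by (rule lnln_lb[OF assms])
  have llpos: "ln (ln (real n)) > 0" using ll by linarith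
  show ?thesis
  proof (cases "n \<ge> 27")
    case True
    have "real (totient n) = real n * (\<Prod>p\<in>prime_factors n. 1 - 1 / real p)"
      by (rule totient_formula2)
    also have "\<dots> \<ge> real n * (exp (-8) / (12 * ln (ln (real n))))"
      using phi_large[OF True] by (intro mult_left_mono) auto
    finally have "real (totient n) \<ge> real n * (exp (-8) / (12 * ln (ln (real n))))" .
    moreover have "(exp (-8) / 324) * real n / ln (ln (real n)) \<le> real n * (exp (-8) / (12 * ln (ln (real n))))"
      using llpos by (simp add: field_simps)
    ultimately show ?thesis by linarith
  next
    case False
    have "totient n > 0" using assms by simp
    then have t1: "real (totient n) \<ge> 1" by linarith
    have "(exp (-8) / 324) * real n / ln (ln (real n)) \<le> (exp (-8) / 324) * 27 / (1/12)"
    proof (intro frac_le mult_left_mono)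
      show "real n \<le> 27" using False by simp
    qed (use ll in auto)
    also have "\<dots> = exp (-8)" by simp
    also have "\<dots> \<le> 1" by simp
    finally show ?thesis using t1 by linarith
  qed
qed

lemma prod_half_aux: "n \<ge> 2 \<Longrightarrow> (\<Prod>j\<in>{1..n}. 1 - 1 / (2::real)^j) \<ge> 9/32 + (3/8) / 2^n"
proof (induction n rule: dec_induct)
  case base
  have "{1..2::nat} = {1,2}" by auto
  then show ?case by simp
next
  case (step n)
  have e: "{1..Suc n} = insert (Suc n) {1..n}" by auto
  have "(\<Prod>j\<in>{1..Suc n}. 1 - 1 / (2::real)^j) = (1 - 1 / 2^Suc n) * (\<Prod>j\<in>{1..n}. 1 - 1 / (2::real)^j)"
    unfolding e by simp
  also have "\<dots> \<ge> (1 - 1 / 2^Suc n) * (9/32 + (3/8) / 2^n)"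
  proof (intro mult_left_mono)
    have "(1::real) \<le> 2^Suc n" by (rule one_le_power) simp
    then have "1 / (2::real)^Suc n \<le> 1" by simp
    then show "0 \<le> 1 - 1 / (2::real)^Suc n" by simp
  qed (use step.IH in simp)
  finally have a: "(\<Prod>j\<in>{1..Suc n}. 1 - 1 / (2::real)^j) \<ge> (1 - 1 / 2^Suc n) * (9/32 + (3/8) / 2^n)" .
  define x :: real where "x = 1 / 2^n"
  have x0: "x \<ge> 0" and x4: "x \<le> 1/4" unfolding x_def using step(1)
  proof -
    show "1 / (2::real)^n \<le> 1/4"
    proof -
      have "(2::real)^n \<ge> 2^2" using step(1) by (intro power_increasing) auto
      then show ?thesis by (simp add: field_simps)
    qed
  qed simp
  have "(1 - 1 / 2^Suc n) * (9/32 + (3/8) / 2^n) = (1 - x/2) * (9/32 + (3/8) * x)"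
    unfolding x_def by simp
  also have "\<dots> \<ge> 9/32 + (3/8) * (x/2)"
  proof -
    have "(1 - x/2) * (9/32 + (3/8) * x) - (9/32 + (3/8) * (x/2)) = (3*x/16) * (1/4 - x)"
      by (simp add: field_simps)
    moreover have "(3*x/16) * (1/4 - x) \<ge> 0" using x0 x4 by (intro mult_nonneg_nonneg) auto
    ultimately show ?thesis by linarith
  qed
  also have "9/32 + (3/8) * (x/2) = 9/32 + (3/8) / (2::real)^Suc n" unfolding x_def by simp
  finally show ?case using a by linarith
qed

lemma prod_half: "(\<Prod>j\<in>{1..n}. 1 - 1 / (2::real)^j) \<ge> 9/32"
proof (cases "n \<ge> 2")
  case True
  have "(3/8) / (2::real)^n \<ge> 0" by simp
  then show ?thesis using prod_half_aux[OF True] by linarith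
next
  case False
  then have "n = 0 \<or> n = 1" by auto
  then show ?thesis by auto
qed



lemma subset_prod_dvd:
  fixes n :: nat
  assumes "n > 0" "X \<subseteq> prime_factors n"
  shows "\<Prod>X dvd n"
proof -
  have "\<Prod>X dvd \<Prod>(prime_factors n)" by (rule prod_dvd_prod_subset) (use assms in auto)
  also have "\<Prod>(prime_factors n) dvd (\<Prod>p\<in>prime_factors n. p ^ multiplicity p n)"
  proof (rule prod_dvd_prod)
    fix p assume "p \<in> prime_factors n"
    then have "multiplicity p n > 0" by (simp add: prime_factors_multiplicity)
    then show "p dvd p ^ multiplicity p n" by simp
  qed
  also have "\<dots> = n" using prime_factorization_nat[OF assms(1)] by simp
  finally show ?thesis .
qed

lemma prod_primes_eq:
  assumes "X \<subseteq> prime_factors n" "Y \<subseteq> prime_factors n" "\<Prod>X = (\<Prod>Y :: nat)"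
  shows "X = Y"
proof -
  have fin: "finite X" "finite Y" using assms(1,2) finite_subset by auto
  have "\<And>X Y. X \<subseteq> prime_factors n \<Longrightarrow> Y \<subseteq> prime_factors n \<Longrightarrow> finite Y \<Longrightarrow> \<Prod>X = (\<Prod>Y :: nat) \<Longrightarrow> X \<subseteq> Y"
  proof
    fix X Y x assume X: "X \<subseteq> prime_factors n" and Y: "Y \<subseteq> prime_factors n" and fT: "finite Y"
      and e: "\<Prod>X = (\<Prod>Y :: nat)" and x: "x \<in> X"
    have fS: "finite X" using X finite_subset by auto
    have px: "prime x" using x X by auto
    have "x dvd \<Prod>X" using dvd_prodI[OF fS x, of "\<lambda>x. x"] by simp
    then have "x dvd \<Prod>Y" using e by simp
    then obtain q where q: "q \<in> Y" "x dvd q" using prime_dvd_prod_iff[OF fT px, of "\<lambda>q. q"] by auto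
    have "prime q" using q Y by auto
    then have "x = q" using primes_dvd_imp_eq[OF px _ q(2)] by simp
    then show "x \<in> Y" using q by simp
  qed
  note L = this
  have "X \<subseteq> Y" by (rule L[OF assms(1,2) fin(2) assms(3)])
  moreover have "Y \<subseteq> X" by (rule L[OF assms(2,1) fin(1) assms(3)[symmetric]])
  ultimately show ?thesis by (rule subset_antisym)
qed

lemma m_inj:
  fixes n :: nat
  assumes "n > 0"
  shows "inj_on (\<lambda>X. n div \<Prod>X) (Pow (prime_factors n))"
proof (rule inj_onI)
  fix X Y assume X: "X \<in> Pow (prime_factors n)" and Y: "Y \<in> Pow (prime_factors n)"
    and e: "n div \<Prod>X = n div \<Prod>Y"
  have dS: "\<Prod>X dvd n" using subset_prod_dvd[OF assms] X by auto
  have dT: "\<Prod>Y dvd n" using subset_prod_dvd[OF assms] Y by auto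
  have kpos: "n div \<Prod>X > 0" 
  proof (rule ccontr)
    assume "\<not> n div \<Prod>X > 0"
    then have "n div \<Prod>X = 0" by simp
    then have "\<Prod>X * (n div \<Prod>X) = 0" by simp
    moreover have "\<Prod>X * (n div \<Prod>X) = n" using dS by simp
    ultimately show False using assms by simp
  qed
  have "\<Prod>X * (n div \<Prod>X) = n" using dS by simp
  moreover have "\<Prod>Y * (n div \<Prod>Y) = n" using dT by simp
  ultimately have "\<Prod>X * (n div \<Prod>X) = \<Prod>Y * (n div \<Prod>X)" using e by simp
  then have "\<Prod>X = \<Prod>Y" using kpos by simp
  then show "X = Y" using prod_primes_eq X Y by auto
qed



lemma sum_identity:
  fixes n :: nat
  assumes n0: "n > 0"
  shows "(\<Sum>X\<in>{X. X \<subseteq> prime_factors n \<and> even (card X)}. real (n div \<Prod>X))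
       - (\<Sum>X\<in>{X. X \<subseteq> prime_factors n \<and> odd (card X)}. real (n div \<Prod>X))
       = real n * (\<Prod>p\<in>prime_factors n. 1 - 1 / real p)"
proof -
  define P where "P = prime_factors n"
  define Ev where "Ev = {X. X \<subseteq> P \<and> even (card X)}"
  define Od where "Od = {X. X \<subseteq> P \<and> odd (card X)}"
  have fP: "finite P" unfolding P_def by simp
  have fE: "finite Ev" unfolding Ev_def using fP by simp
  have fO: "finite Od" unfolding Od_def using fP by simp
  define f where "f X = (-1::real)^card X * real (n div \<Prod>X)" for X
  have "(\<Prod>p\<in>P. 1 - 1 / real p) = (\<Prod>p\<in>P. (- (1 / real p)) + 1)" by simp
  also have "\<dots> = (\<Sum>X\<in>Pow P. (\<Prod>x\<in>X. - (1 / real x)) * (\<Prod>x\<in>P - X. 1))"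
    by (rule prod_add[OF fP])
  also have "\<dots> = (\<Sum>X\<in>Pow P. (-1)^card X / real (\<Prod>X))"
  proof (rule sum.cong)
    fix X assume "X \<in> Pow P"
    have "(\<Prod>x\<in>X. - (1 / real x)) = (\<Prod>x\<in>X. (-1) / real x)" by simp
    also have "\<dots> = (\<Prod>x\<in>X. (-1::real)) / (\<Prod>x\<in>X. real x)" by (rule prod_dividef)
    also have "\<dots> = (-1)^card X / real (\<Prod>X)" by (simp add: of_nat_prod)
    finally show "(\<Prod>x\<in>X. - (1 / real x)) * (\<Prod>x\<in>P - X. 1) = (-1)^card X / real (\<Prod>X)" by simp
  qed simp
  finally have "real n * (\<Prod>p\<in>P. 1 - 1 / real p) = real n * (\<Sum>X\<in>Pow P. (-1)^card X / real (\<Prod>X))"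
    by simp
  also have "\<dots> = (\<Sum>X\<in>Pow P. f X)"
    unfolding sum_distrib_left
  proof (rule sum.cong)
    fix X assume X: "X \<in> Pow P"
    have d: "\<Prod>X dvd n" using subset_prod_dvd[OF n0] X unfolding P_def by auto
    show "real n * ((-1)^card X / real (\<Prod>X)) = f X"
      unfolding f_def using real_of_nat_div[OF d] by simp
  qed simp
  also have "Pow P = Ev \<union> Od" unfolding Ev_def Od_def by auto
  also have "(\<Sum>X\<in>Ev \<union> Od. f X) = (\<Sum>X\<in>Ev. f X) + (\<Sum>X\<in>Od. f X)"
    by (rule sum.union_disjoint[OF fE fO]) (auto simp: Ev_def Od_def)
  also have "(\<Sum>X\<in>Ev. f X) = (\<Sum>X\<in>Ev. real (n div \<Prod>X))"
    by (rule sum.cong) (auto simp: f_def Ev_def)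
  also have "(\<Sum>X\<in>Od. f X) = - (\<Sum>X\<in>Od. real (n div \<Prod>X))"
    unfolding sum_negf[symmetric] by (rule sum.cong) (auto simp: f_def Od_def)
  finally show ?thesis unfolding P_def Ev_def Od_def by simp
qed



lemma cof_main:
  fixes a n :: nat
  assumes a2: "a \<ge> 2" and n0: "n > 0"
  shows "primover_cofactor a n \<ge> (9/32) * real a ^ totient n"
proof -
  define P where "P = prime_factors n"
  define Ev where "Ev = {X. X \<subseteq> P \<and> even (card X)}"
  define Od where "Od = {X. X \<subseteq> P \<and> odd (card X)}"
  define m where "m X = n div \<Prod>X" for X :: "nat set"
  define g where "g X = 1 - 1 / real a ^ m X" for X
  have fP: "finite P" unfolding P_def by simp
  have fE: "finite Ev" unfolding Ev_def using fP by simp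
  have fO: "finite Od" unfolding Od_def using fP by simp
  have apos: "real a > 0" using a2 by simp
  have mrange: "m X \<ge> 1 \<and> m X \<le> n" if "X \<subseteq> P" for X
  proof -
    have dS: "\<Prod>X dvd n" using subset_prod_dvd[OF n0] that unfolding P_def by auto
    have "n div \<Prod>X > 0"
    proof (rule ccontr)
      assume "\<not> n div \<Prod>X > 0"
      then have "\<Prod>X * (n div \<Prod>X) = 0" by simp
      moreover have "\<Prod>X * (n div \<Prod>X) = n" using dS by simp
      ultimately show False using n0 by simp
    qed
    then show ?thesis unfolding m_def by (simp add: div_le_dividend)
  qed
  have apow: "real a ^ k \<ge> 2" if "k \<ge> 1" for k
  proof -
    have r: "real a \<ge> 2" using a2 by simp
    have "real a ^ k \<ge> real a ^ 1" using r that by (intro power_increasing) auto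
    then have "real a ^ k \<ge> real a" by (simp only: power_one_right)
    then show ?thesis using r by linarith
  qed
  have grange: "0 < g X \<and> g X \<le> 1" if "X \<subseteq> P" for X
  proof -
    have "real a ^ m X \<ge> 2" using apow mrange[OF that] by simp
    then have "1 / real a ^ m X \<le> 1 / 2" using a2 by (intro divide_left_mono) auto
    moreover have "1 / real a ^ m X > 0" using apos by simp
    ultimately show ?thesis unfolding g_def by simp
  qed
  have fac: "real a ^ m X - 1 = real a ^ m X * g X" for X
    unfolding g_def using apos by (simp add: field_simps)
  have numer: "(\<Prod>X\<in>Ev. real a ^ m X - 1) = real a ^ (\<Sum>X\<in>Ev. m X) * (\<Prod>X\<in>Ev. g X)"
    unfolding fac prod.distrib power_sum by simp
  have denom: "(\<Prod>X\<in>Od. real a ^ m X - 1) = real a ^ (\<Sum>X\<in>Od. m X) * (\<Prod>X\<in>Od. g X)"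
    unfolding fac prod.distrib power_sum by simp
  have sums: "(\<Sum>X\<in>Ev. m X) = (\<Sum>X\<in>Od. m X) + totient n"
  proof -
    have "real (\<Sum>X\<in>Ev. m X) - real (\<Sum>X\<in>Od. m X) = real (totient n)"
      using sum_identity[OF n0] totient_formula2[of n]
      unfolding Ev_def Od_def m_def P_def of_nat_sum by simp
    then have "real (\<Sum>X\<in>Ev. m X) = real ((\<Sum>X\<in>Od. m X) + totient n)" by simp
    then show ?thesis by (simp only: of_nat_eq_iff)
  qed
  have GO: "0 < (\<Prod>X\<in>Od. g X)" "(\<Prod>X\<in>Od. g X) \<le> 1"
    using grange unfolding Od_def by (auto intro!: prod_pos prod_le_1 simp: less_imp_le)
  have GE: "(\<Prod>X\<in>Ev. g X) \<ge> 9/32"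
  proof -
    have inj: "inj_on m Ev"
      using m_inj[OF n0] unfolding m_def Ev_def P_def by (rule inj_on_subset) auto
    define h where "h j = 1 - 1 / real a ^ j" for j :: nat
    have "(\<Prod>X\<in>Ev. g X) = (\<Prod>j\<in>m ` Ev. h j)"
      by (subst prod.reindex[OF inj]) (simp add: g_def h_def o_def)
    moreover have "(\<Prod>j\<in>{1..n}. h j) \<le> (\<Prod>j\<in>m ` Ev. h j)"
    proof (rule prod_sub_le)
      show "m ` Ev \<subseteq> {1..n}" using mrange unfolding Ev_def by auto
      fix j assume j: "j \<in> {1..n}"
      then have "real a ^ j \<ge> 2" using apow by simp
      then have "1 / real a ^ j \<le> 1 / 2" using a2 by (intro divide_left_mono) auto
      moreover have "1 / real a ^ j > 0" using apos by simp
      ultimately show "0 \<le> h j \<and> h j \<le> 1" unfolding h_def by simp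
    qed simp
    moreover have "(\<Prod>j\<in>{1..n}. 1 - 1 / (2::real)^j) \<le> (\<Prod>j\<in>{1..n}. h j)"
    proof (rule prod_mono)
      fix j assume j: "j \<in> {1..n}"
      have "(2::real)^j \<le> real a ^ j" using a2 by (intro power_mono) auto
      then have "1 / real a ^ j \<le> 1 / (2::real)^j" using apos by (intro divide_left_mono) auto
      moreover have "1 / (2::real)^j \<le> 1" by simp
      ultimately show "0 \<le> 1 - 1 / (2::real)^j \<and> 1 - 1 / (2::real)^j \<le> h j"
        unfolding h_def by simp
    qed
    ultimately show ?thesis using prod_half[of n] by linarith
  qed
  have "primover_cofactor a n = (\<Prod>X\<in>Ev. real a ^ m X - 1) / (\<Prod>X\<in>Od. real a ^ m X - 1)"
    unfolding primover_cofactor_def Ev_def Od_def m_def P_def by simp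
  also have "\<dots> = (real a ^ (\<Sum>X\<in>Od. m X) * real a ^ totient n * (\<Prod>X\<in>Ev. g X))
                 / (real a ^ (\<Sum>X\<in>Od. m X) * (\<Prod>X\<in>Od. g X))"
    unfolding numer denom sums power_add by simp
  also have "\<dots> = real a ^ totient n * (\<Prod>X\<in>Ev. g X) / (\<Prod>X\<in>Od. g X)"
    using apos by simp
  also have "\<dots> \<ge> real a ^ totient n * (\<Prod>X\<in>Ev. g X)"
  proof -
    have "real a ^ totient n * (\<Prod>X\<in>Ev. g X) \<ge> 0" using GE apos by simp
    then have "real a ^ totient n * (\<Prod>X\<in>Ev. g X) * (\<Prod>X\<in>Od. g X) \<le> real a ^ totient n * (\<Prod>X\<in>Ev. g X) * 1"
      using GO by (intro mult_left_mono) auto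
    then show ?thesis using GO by (simp add: le_divide_eq)
  qed
  also have "real a ^ totient n * (\<Prod>X\<in>Ev. g X) \<ge> real a ^ totient n * (9/32)"
    using GE apos by (intro mult_left_mono) auto
  finally show ?thesis by (simp add: mult.commute)
qed



lemma four_powr: "(4::real) powr (19/20) \<ge> 32/9"
proof -
  define z where "z = (4::real) powr (19/20)"
  have z0: "z \<ge> 0" unfolding z_def by simp
  have "z ^ 20 = (4::real) powr (19/20 * 20)"
    unfolding z_def by (subst powr_realpow[symmetric]) (auto simp: powr_powr)
  also have "\<dots> = 4 ^ 19" using powr_realpow[of 4 19] by simp
  finally have "z ^ Suc 19 = 4 ^ 19" by simp
  moreover have "(32/9::real) ^ Suc 19 \<le> 4 ^ 19"
  proof -
    have "(32/9::real) ^ Suc 19 = 32 ^ Suc 19 / 9 ^ Suc 19" by (simp only: power_divide)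
    moreover have "(32::real) ^ Suc 19 \<le> 4 ^ 19 * 9 ^ Suc 19" by simp
    ultimately show ?thesis by (simp add: divide_le_eq)
  qed
  ultimately have "(32/9::real) ^ Suc 19 \<le> z ^ Suc 19" by simp
  then show ?thesis unfolding z_def[symmetric] using z0 by (rule power_le_imp_le_base)
qed

lemma powr_aux:
  fixes X :: real
  assumes "X \<ge> 4"
  shows "X powr (1/20) \<le> (9/32) * X"
proof -
  have X0: "X > 0" using assms by simp
  have "X = X powr (1/20 + 19/20)" using X0 by simp
  also have "\<dots> = X powr (1/20) * X powr (19/20)" by (rule powr_add)
  finally have e: "X = X powr (1/20) * X powr (19/20)" .
  have "X powr (19/20) \<ge> 4 powr (19/20)" using assms by (intro powr_mono2) auto
  then have "X powr (19/20) \<ge> 32/9" using four_powr by linarith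
  then have "X powr (1/20) * X powr (19/20) \<ge> X powr (1/20) * (32/9)"
    by (intro mult_left_mono) auto
  then show ?thesis using e by linarith
qed

theorem theorem12:
  "\<exists>C1::real. C1 > 0 \<and>
     (\<forall>a n :: nat. a \<ge> 2 \<longrightarrow> n \<ge> 3 \<longrightarrow>
        primover_cofactor a n \<ge> (real a ^ n - 1) powr (C1 / ln (ln (real n))))"
proof (intro exI[of _ "exp (-8) / 6480"] conjI allI impI)
  show "exp (-8) / 6480 > (0::real)" by simp
  fix a n :: nat
  assume a2: "a \<ge> 2" and n3: "n \<ge> 3"
  define e where "e = (exp (-8) / 6480) / ln (ln (real n))"
  have ll: "ln (ln (real n)) \<ge> 1/12" by (rule lnln_lb[OF n3])
  have e0: "e \<ge> 0" unfolding e_def using ll by simp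
  have ra: "real a \<ge> 2" using a2 by simp
  define t where "t = totient n"
  have t2: "t \<ge> 2"
  proof -
    have "even t" unfolding t_def using n3 by (intro totient_even) auto
    moreover have "t > 0" unfolding t_def using n3 by simp
    ultimately show ?thesis by (auto elim: evenE)
  qed
  have X4: "real a ^ t \<ge> 4"
  proof -
    have "real a ^ t \<ge> 2 ^ t" using ra by (intro power_mono) auto
    moreover have "(2::real) ^ t \<ge> 2 ^ 2" using t2 by (intro power_increasing) auto
    ultimately show ?thesis by simp
  qed
  have "primover_cofactor a n \<ge> (9/32) * real a ^ t"
    unfolding t_def by (rule cof_main[OF a2]) (use n3 in simp)
  moreover have "(real a ^ t) powr (1/20) \<le> (9/32) * real a ^ t" by (rule powr_aux[OF X4])
  moreover have "(real a ^ t) powr (1/20) = real a powr (real t / 20)"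
    using ra by (simp add: powr_realpow[symmetric] powr_powr)
  moreover have "(real a ^ n - 1) powr e \<le> real a powr (real t / 20)"
  proof -
    have "real a ^ n \<ge> 1" using ra by (intro one_le_power) auto
    then have "(real a ^ n - 1) powr e \<le> (real a ^ n) powr e"
      using e0 by (intro powr_mono2) auto
    also have "(real a ^ n) powr e = real a powr (real n * e)"
      using ra by (simp add: powr_realpow[symmetric] powr_powr)
    also have "\<dots> \<le> real a powr (real t / 20)"
    proof (intro powr_mono)
      have "real t \<ge> (exp (-8) / 324) * real n / ln (ln (real n))"
        unfolding t_def by (rule totient_lb[OF n3])
      moreover have "real n * e = ((exp (-8) / 324) * real n / ln (ln (real n))) / 20"
        unfolding e_def by simp
      ultimately show "real n * e \<le> real t / 20" by (simp add: ac_simps)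
    qed (use ra in simp)
    finally show ?thesis .
  qed
  ultimately show "primover_cofactor a n \<ge> (real a ^ n - 1) powr ((exp (-8) / 6480) / ln (ln (real n)))"
    unfolding e_def by linarith
qed


end
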